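(* Let $K\ge2$ and consider a random point process on a discrete circle with holes indexed $1,2,\dots,K$ in clockwise order (each hole contains at most one particle), whose law is invariant under rotation, and such that $M:=\mathbb P(\text{there is a particle at hole }K)>0$. Define: $W\in\{1,\dots,K\}$, the smallest index $l$ such that hole $l$ contains a particle; $\mathrm{Sp}_1\in\{1,\dots,K\}$, the length of the arc through hole $K$ between the two consecutive particles surrounding it, namely the first particle clockwise strictly after hole $K$ and the last particle at or counterclockwise before hole $K$; and $\mathrm{Sp}_2\in\{1,\dots,K\}$, defined on the event that hole $K$ contains a particle, as the clockwise distance from hole $K$ to the next hole containing a particle. Let $g(L)=\mathbb P(W=L)$, $f_1(L)=\mathbb P(\mathrm{Sp}_1=L)$, $f_2(L)=\mathbb P(\mathrm{Sp}_2=L\mid\text{particle at hole }K)$, and $\Delta g(L)=g(L+1)-g(L)$ (with $g(K+1)=0$). Then for all $L\in\{1,\dots,K\}$, $$-\Delta g(L)\cdot L=f_1(L),\qquad -\Delta g(L)=M\cdot f_2(L).$$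
   Context: Distances are measured in numbers of steps between adjacent holes along the circle (adjacent holes are at distance 1). If hole $K$ is the only occupied hole, $\mathrm{Sp}_1=\mathrm{Sp}_2=W=K$. *)

theory Defs
  imports "HOL-Probability.Probability"
begin

text \<open>Holes are 1..K in clockwise order; a configuration is the set of occupied holes.\<close>

definition hole_cw :: "nat \<Rightarrow> nat \<Rightarrow> nat \<Rightarrow> nat" where
  "hole_cw K h d = (h + d - 1) mod K + 1"

definition rot :: "nat \<Rightarrow> nat set \<Rightarrow> nat set" where
  "rot K S = (\<lambda>i. hole_cw K i 1) ` S"

definition occ :: "nat \<Rightarrow> nat set \<Rightarrow> bool" where
  "occ K S \<longleftrightarrow> S \<inter> {1..K} \<noteq> {}"

definition W :: "nat \<Rightarrow> nat set \<Rightarrow> nat" where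
  "W K S = (if occ K S then (LEAST l. 1 \<le> l \<and> l \<le> K \<and> l \<in> S) else 0)"

definition fwd :: "nat \<Rightarrow> nat set \<Rightarrow> nat" where
  "fwd K S = (LEAST d. 1 \<le> d \<and> d \<le> K \<and> hole_cw K K d \<in> S)"

definition bwd :: "nat \<Rightarrow> nat set \<Rightarrow> nat" where
  "bwd K S = (LEAST d. d < K \<and> K - d \<in> S)"

definition Sp1 :: "nat \<Rightarrow> nat set \<Rightarrow> nat" where
  "Sp1 K S = (if occ K S then bwd K S + fwd K S else 0)"

definition Sp2 :: "nat \<Rightarrow> nat set \<Rightarrow> nat" where
  "Sp2 K S = (if K \<in> S then fwd K S else 0)"

end

theory Submission
  imports Defs
begin

lemma probU:
  assumes "\<forall>S\<in>set_pmf p. S \<subseteq> {1..K}"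
    and "\<And>S. S \<subseteq> {1..K} \<Longrightarrow> (S \<in> A \<longleftrightarrow> S \<in> B)"
  shows "measure_pmf.prob p A = measure_pmf.prob p B"
proof -
  have "A \<inter> set_pmf p = B \<inter> set_pmf p" using assms by blast
  then show ?thesis by (metis measure_Int_set_pmf)
qed

lemma rot_mem:
  assumes "S \<subseteq> {1..K}" "K \<ge> 1"
  shows "x \<in> rot K S \<longleftrightarrow> (x = 1 \<and> K \<in> S) \<or> (2 \<le> x \<and> x \<le> K \<and> x - 1 \<in> S)"
proof -
  have e: "hole_cw K i 1 = (if i = K then 1 else i + 1)" if "i \<in> {1..K}" for i
    using that by (auto simp: hole_cw_def)
  show ?thesis
  proof
    assume "x \<in> rot K S"
    then obtain i where i: "i \<in> S" "x = hole_cw K i 1" unfolding rot_def by auto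
    then show "(x = 1 \<and> K \<in> S) \<or> (2 \<le> x \<and> x \<le> K \<and> x - 1 \<in> S)"
      using e[of i] assms by (cases "i = K") auto
  next
    assume h: "(x = 1 \<and> K \<in> S) \<or> (2 \<le> x \<and> x \<le> K \<and> x - 1 \<in> S)"
    show "x \<in> rot K S"
    proof (cases "x = 1 \<and> K \<in> S")
      case True
      then show ?thesis using e[of K] assms unfolding rot_def by (auto intro!: image_eqI[of _ _ K])
    next
      case False
      then have "2 \<le> x \<and> x \<le> K \<and> x - 1 \<in> S" using h by auto
      then show ?thesis using e[of "x-1"] assms unfolding rot_def
        by (auto intro!: image_eqI[of _ _ "x-1"])
    qed
  qed
qed

lemma rot_ball:
  assumes "S \<subseteq> {1..K}" "K \<ge> 1"
  shows "(\<forall>x\<in>rot K S. P x) \<longleftrightarrow> (K \<in> S \<longrightarrow> P 1) \<and> (\<forall>i\<in>S. i < K \<longrightarrow> P (i + 1))"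
proof -
  have "(\<forall>x\<in>rot K S. P x) \<longleftrightarrow> (\<forall>x. ((x = 1 \<and> K \<in> S) \<or> (2 \<le> x \<and> x \<le> K \<and> x - 1 \<in> S)) \<longrightarrow> P x)"
    using rot_mem[OF assms] by blast
  also have "\<dots> \<longleftrightarrow> (K \<in> S \<longrightarrow> P 1) \<and> (\<forall>i\<in>S. i < K \<longrightarrow> P (i + 1))"
  proof safe
    fix i assume "\<forall>x. x = 1 \<and> K \<in> S \<or> 2 \<le> x \<and> x \<le> K \<and> x - 1 \<in> S \<longrightarrow> P x" "i \<in> S" "i < K"
    moreover have "1 \<le> i" using assms \<open>i \<in> S\<close> by auto
    ultimately show "P (i+1)" by (metis add_diff_cancel_right' add_le_mono1 one_add_one Suc_eq_plus1 Suc_le_eq)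
  next
    fix x assume "\<forall>i\<in>S. i < K \<longrightarrow> P (i + 1)" "2 \<le> x" "x \<le> K" "x - 1 \<in> S"
    moreover have "x - 1 < K" "x - 1 + 1 = x" using \<open>2 \<le> x\<close> \<open>x \<le> K\<close> by auto
    ultimately show "P x" by metis
  qed auto
  finally show ?thesis .
qed

lemma W_iff:
  assumes "S \<subseteq> {1..K}" "a \<ge> 1"
  shows "W K S = a \<longleftrightarrow> a \<in> S \<and> (\<forall>i\<in>S. a \<le> i)"
proof (cases "S = {}")
  case True then show ?thesis using assms by (auto simp: W_def occ_def)
next
  case False
  have fin: "finite S" using assms(1) finite_subset by blast
  have mS: "Min S \<in> S" using fin False by simp
  then have "Min S \<le> K" "1 \<le> Min S" using assms(1) by auto
  have "occ K S" using False assms(1) by (auto simp: occ_def)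
  moreover have "(LEAST l. 1 \<le> l \<and> l \<le> K \<and> l \<in> S) = Min S"
    by (rule Least_equality) (use fin False assms(1) mS \<open>Min S \<le> K\<close> in auto)
  ultimately have "W K S = Min S" by (simp add: W_def)
  moreover have "Min S = a \<longleftrightarrow> a \<in> S \<and> (\<forall>i\<in>S. a \<le> i)"
    using fin mS by (metis Min_eqI Min_le)
  ultimately show ?thesis by simp
qed

lemma fwd_eq:
  assumes "S \<subseteq> {1..K}" "S \<noteq> {}"
  shows "fwd K S = Min S"
proof -
  have fin: "finite S" using assms(1) finite_subset by blast
  have h: "hole_cw K K d = d" if "1 \<le> d" "d \<le> K" for d
  proof (cases "d = K")
    case True
    have "K \<ge> 1" using assms by auto
    then have "K + K - 1 = (K - 1) + K" by simp
    then have "(K + K - 1) mod K = (K - 1) mod K" by simp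
    also have "\<dots> = K - 1" using \<open>K \<ge> 1\<close> by simp
    finally show ?thesis using True \<open>K \<ge> 1\<close> by (simp add: hole_cw_def)
  next
    case False
    have "K + d - 1 = (d - 1) + K" using that by simp
    then have "(K + d - 1) mod K = (d - 1) mod K" by simp
    also have "\<dots> = d - 1" using that False by simp
    finally show ?thesis using that by (simp add: hole_cw_def)
  qed
  have mS: "Min S \<in> S" using fin assms by simp
  then have b: "Min S \<le> K" "1 \<le> Min S" using assms(1) by auto
  have "hole_cw K K (Min S) = Min S" using h b by simp
  then show ?thesis unfolding fwd_def
    by (intro Least_equality) (use fin assms h b mS in auto)
qed

lemma bwd_eq:
  assumes "S \<subseteq> {1..K}" "S \<noteq> {}"
  shows "bwd K S = K - Max S"
proof -
  have fin: "finite S" using assms(1) finite_subset by blast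
  have m: "Max S \<in> S" using fin assms by simp
  then have "1 \<le> Max S" "Max S \<le> K" using assms by auto
  show ?thesis unfolding bwd_def
  proof (rule Least_equality)
    show "K - Max S < K \<and> K - (K - Max S) \<in> S" using m \<open>1 \<le> Max S\<close> \<open>Max S \<le> K\<close> by auto
  next
    fix d assume "d < K \<and> K - d \<in> S"
    then have "K - d \<le> Max S" using fin by auto
    then show "K - Max S \<le> d" by linarith
  qed
qed

definition Bset :: "nat \<Rightarrow> nat \<Rightarrow> nat \<Rightarrow> nat set set" where
  "Bset K L j = {S. K - j \<in> S \<and> L - j \<in> S \<and> (\<forall>i\<in>S. L - j \<le> i \<and> i \<le> K - j)}"

lemma Sp1_iff:
  assumes "S \<subseteq> {1..K}" "1 \<le> L" "L \<le> K"
  shows "Sp1 K S = L \<longleftrightarrow> (\<exists>j<L. S \<in> Bset K L j)"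
proof (cases "S = {}")
  case True then show ?thesis using assms by (auto simp: Sp1_def occ_def Bset_def)
next
  case False
  have fin: "finite S" using assms(1) finite_subset by blast
  have "occ K S" using False assms(1) by (auto simp: occ_def)
  then have sp: "Sp1 K S = (K - Max S) + Min S"
    using bwd_eq[OF assms(1) False] fwd_eq[OF assms(1) False] by (simp add: Sp1_def)
  have mi: "Min S \<in> S" "Max S \<in> S" using fin False by auto
  then have b: "1 \<le> Min S" "Max S \<le> K" "Min S \<le> Max S" using assms(1) fin False by auto
  show ?thesis
  proof
    assume "Sp1 K S = L"
    then have e: "L = K - Max S + Min S" using sp by simp
    show "\<exists>j<L. S \<in> Bset K L j"
      apply (rule exI[of _ "K - Max S"])
      using e b mi fin by (auto simp: Bset_def)
  next
    assume "\<exists>j<L. S \<in> Bset K L j"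
    then obtain j where j: "j < L" "S \<in> Bset K L j" by blast
    have "Max S = K - j" using j fin by (auto simp: Bset_def intro!: Max_eqI)
    moreover have "Min S = L - j" using j fin by (auto simp: Bset_def intro!: Min_eqI)
    ultimately show "Sp1 K S = L" using sp j assms by simp
  qed
qed

theorem proposition4p2:
  fixes K :: nat and p :: "nat set pmf"
  assumes "K \<ge> 2"
    and "\<forall>S\<in>set_pmf p. S \<subseteq> {1..K}"
    and "map_pmf (rot K) p = p"
    and "measure_pmf.prob p {S. K \<in> S} > 0"
  shows "\<forall>L\<in>{1..K}.
     let M = measure_pmf.prob p {S. K \<in> S};
         g = (\<lambda>l. measure_pmf.prob p {S. W K S = l});
         f1 = (\<lambda>l. measure_pmf.prob p {S. Sp1 K S = l});
         f2 = (\<lambda>l. measure_pmf.prob p {S. K \<in> S \<and> Sp2 K S = l} / M)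
     in - (g (L + 1) - g L) * real L = f1 L \<and> - (g (L + 1) - g L) = M * f2 L"
proof
  fix L assume L: "L \<in> {1..K}"
  define P where "P = measure_pmf.prob p"
  have K1: "K \<ge> 1" using assms(1) by simp
  have rotP: "P A = P (rot K -` A)" for A
    unfolding P_def by (metis assms(3) measure_map_pmf)
  define C where "C = P {S. K \<in> S \<and> L \<in> S \<and> (\<forall>i\<in>S. L \<le> i)}"
  have g1: "P {S. W K S = L} = C + P {S. W K S = L + 1}"
  proof -
    have "P {S. W K S = L + 1} = P (rot K -` {S. W K S = L + 1})" by (rule rotP)
    also have "\<dots> = P {S. K \<notin> S \<and> L \<in> S \<and> (\<forall>i\<in>S. L \<le> i)}"
      unfolding P_def
    proof (rule probU[OF assms(2)])
      fix S :: "nat set" assume S: "S \<subseteq> {1..K}"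
      have RS: "rot K S \<subseteq> {1..K}" using rot_mem[OF S K1] K1 by auto
      show "S \<in> rot K -` {S. W K S = L + 1} \<longleftrightarrow> S \<in> {S. K \<notin> S \<and> L \<in> S \<and> (\<forall>i\<in>S. L \<le> i)}"
        using W_iff[OF RS, of "L+1"] rot_mem[OF S K1, of "L+1"] rot_ball[OF S K1, of "\<lambda>x. L + 1 \<le> x"] L S K1
        by (cases "L = K") auto
    qed
    finally have a: "P {S. W K S = L + 1} = P {S. K \<notin> S \<and> L \<in> S \<and> (\<forall>i\<in>S. L \<le> i)}" .
    have "P {S. W K S = L} = P ({S. K \<in> S \<and> L \<in> S \<and> (\<forall>i\<in>S. L \<le> i)} \<union> {S. K \<notin> S \<and> L \<in> S \<and> (\<forall>i\<in>S. L \<le> i)})"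
      unfolding P_def
      by (rule probU[OF assms(2)]) (use W_iff L in auto)
    also have "\<dots> = C + P {S. K \<notin> S \<and> L \<in> S \<and> (\<forall>i\<in>S. L \<le> i)}"
      unfolding P_def C_def by (subst measure_pmf.finite_measure_Union) auto
    finally show ?thesis using a by simp
  qed
  have s2: "P {S. K \<in> S \<and> Sp2 K S = L} = C"
    unfolding P_def C_def
  proof (rule probU[OF assms(2)])
    fix S :: "nat set" assume S: "S \<subseteq> {1..K}"
    show "S \<in> {S. K \<in> S \<and> Sp2 K S = L} \<longleftrightarrow> S \<in> {S. K \<in> S \<and> L \<in> S \<and> (\<forall>i\<in>S. L \<le> i)}"
    proof (cases "K \<in> S")
      case True
      then have ne: "S \<noteq> {}" by auto
      have fin: "finite S" using S finite_subset by blast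
      have mS: "Min S \<in> S" using fin ne by simp
      have "Min S = L \<longleftrightarrow> L \<in> S \<and> (\<forall>i\<in>S. L \<le> i)"
        using fin mS by (metis Min_eqI Min_le)
      then show ?thesis using True fwd_eq[OF S ne] by (simp add: Sp2_def)
    qed auto
  qed
  have Bj: "P (Bset K L j) = C" if "j < L" for j
    using that
  proof (induction j)
    case 0
    show ?case unfolding P_def C_def
      by (rule probU[OF assms(2)]) (auto simp: Bset_def)
  next
    case (Suc j)
    have "P (Bset K L j) = P (rot K -` Bset K L j)" by (rule rotP)
    also have "\<dots> = P (Bset K L (Suc j))"
      unfolding P_def
    proof (rule probU[OF assms(2)])
      fix S :: "nat set" assume S: "S \<subseteq> {1..K}"
      have RS: "rot K S \<subseteq> {1..K}" using rot_mem[OF S K1] K1 by auto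
      show "S \<in> rot K -` Bset K L j \<longleftrightarrow> S \<in> Bset K L (Suc j)"
        using rot_mem[OF S K1, of "K - j"] rot_mem[OF S K1, of "L - j"]
          rot_ball[OF S K1, of "\<lambda>i. L - j \<le> i \<and> i \<le> K - j"] Suc.prems L S
      proof -
        have a: "K - j \<in> rot K S \<longleftrightarrow> K - Suc j \<in> S"
          using rot_mem[OF S K1, of "K - j"] Suc.prems L by auto
        have b: "L - j \<in> rot K S \<longleftrightarrow> L - Suc j \<in> S"
          using rot_mem[OF S K1, of "L - j"] Suc.prems L by auto
        have c: "(\<forall>x\<in>rot K S. L - j \<le> x \<and> x \<le> K - j) \<longleftrightarrow> (\<forall>i\<in>S. L - Suc j \<le> i \<and> i \<le> K - Suc j)"
          unfolding rot_ball[OF S K1, of "\<lambda>x. L - j \<le> x \<and> x \<le> K - j"]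
        proof
          assume H: "(K \<in> S \<longrightarrow> L - j \<le> 1 \<and> 1 \<le> K - j) \<and> (\<forall>i\<in>S. i < K \<longrightarrow> L - j \<le> i + 1 \<and> i + 1 \<le> K - j)"
          show "\<forall>i\<in>S. L - Suc j \<le> i \<and> i \<le> K - Suc j"
          proof
            fix i assume i: "i \<in> S"
            have "i \<le> K" using i S by auto
            moreover have "K \<notin> S" using H Suc.prems by auto
            ultimately have "i < K" using i by (cases "i = K") auto
            then show "L - Suc j \<le> i \<and> i \<le> K - Suc j" using H i Suc.prems L by auto
          qed
        next
          assume H: "\<forall>i\<in>S. L - Suc j \<le> i \<and> i \<le> K - Suc j"
          have "K \<notin> S" using H Suc.prems L by (auto dest: bspec[of _ _ K])
          moreover have "\<forall>i\<in>S. i < K \<longrightarrow> L - j \<le> i + 1 \<and> i + 1 \<le> K - j"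
            using H Suc.prems L by auto
          ultimately show "(K \<in> S \<longrightarrow> L - j \<le> 1 \<and> 1 \<le> K - j) \<and> (\<forall>i\<in>S. i < K \<longrightarrow> L - j \<le> i + 1 \<and> i + 1 \<le> K - j)"
            by blast
        qed
        show ?thesis unfolding Bset_def using a b c by simp
      qed
    qed
    finally show ?case using Suc by simp
  qed
  have f1: "P {S. Sp1 K S = L} = real L * C"
  proof -
    have "P {S. Sp1 K S = L} = P (\<Union>j\<in>{..<L}. Bset K L j)"
      unfolding P_def by (rule probU[OF assms(2)]) (use Sp1_iff L in auto)
    also have "\<dots> = (\<Sum>j\<in>{..<L}. P (Bset K L j))"
      unfolding P_def
    proof (rule measure_pmf.finite_measure_finite_Union)
      show "disjoint_family_on (Bset K L) {..<L}"
        unfolding disjoint_family_on_def Bset_def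
      proof (intro ballI impI)
        fix j j' assume "j \<in> {..<L}" "j' \<in> {..<L}" "j \<noteq> j'"
        then have "K - j \<noteq> K - j'" using L by auto
        then show "{S. K - j \<in> S \<and> L - j \<in> S \<and> (\<forall>i\<in>S. L - j \<le> i \<and> i \<le> K - j)} \<inter>
          {S. K - j' \<in> S \<and> L - j' \<in> S \<and> (\<forall>i\<in>S. L - j' \<le> i \<and> i \<le> K - j')} = {}"
          by (auto dest: le_antisym)
      qed
    qed auto
    also have "\<dots> = real L * C" using Bj by simp
    finally show ?thesis .
  qed
  have Mpos: "P {S. K \<in> S} > 0" using assms(4) by (simp add: P_def)
  show "let M = measure_pmf.prob p {S. K \<in> S};
         g = (\<lambda>l. measure_pmf.prob p {S. W K S = l});
         f1 = (\<lambda>l. measure_pmf.prob p {S. Sp1 K S = l});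
         f2 = (\<lambda>l. measure_pmf.prob p {S. K \<in> S \<and> Sp2 K S = l} / M)
     in - (g (L + 1) - g L) * real L = f1 L \<and> - (g (L + 1) - g L) = M * f2 L"
    using g1 s2 f1 Mpos unfolding P_def Let_def by simp
qed

end
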